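(* Let $\mathcal{D}$ be a distribution over $\mathcal{X}\times\mathcal{Y}$ where $\mathcal{Y}\subseteq\mathbb{R}^d$ and $\|y\|_\infty\le M$ for all $y\in\mathcal{Y}$, let $\alpha>0$, and let $\mathcal{T}$ be a bucketing with width $w=\sqrt{\alpha/M}$. Let $\pi:\mathcal{X}\to\Omega$ be an arbitrary policy and let $h:\mathcal{X}\to\mathcal{Y}$ be a model that is $\alpha$-consistent with respect to $\pi$. Then \[\left|\mathbb{E}_{\mathcal{D}}[\pi(x)\cdot h(x)]-\mathbb{E}_{\mathcal{D}}[\pi(x)\cdot y]\right|\le 2d\sqrt{\alpha M}.\]
   Context: $\Omega\subseteq[0,1]^d$ is an arbitrary (not necessarily convex) feasible set of actions; a policy is a map $\pi:\mathcal{X}\to\Omega$; a model is a map $h:\mathcal{X}\to\mathcal{Y}$. A bucketing $\mathcal{T}$ of width $w$ is a partition of $[0,1]$ into $1/w$ consecutive intervals ("buckets") $\tau$ of width $w$. A model $h$ is $\alpha$-consistent with respect to a collection of sets $\mathcal{C}\subseteq 2^{\mathcal{X}}$ if for every $C\in\mathcal{C}$, $\|\mathbb{E}_{\mathcal{D}}[y-h(x)\mid x\in C]\|_\infty\le \alpha/\Pr[x\in C]$. The level sets of a policy $\pi$ are $\mathcal{C}^{\mathcal{T}}_\pi=\{\{x:\pi(x)_i\in\tau\}: i\in[d],\tau\in\mathcal{T}\}$. A model $h$ is $\alpha$-consistent with respect to a policy $\pi$ if it is $\alpha$-consistent with respect to $\mathcal{C}^{\mathcal{T}}_\pi$. *)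

theory Defs
  imports "HOL-Probability.Probability"
begin

text \<open>A bucketing of width w: a partition of [0,1] into 1/w (nonempty, bounded) intervals,
  each of width w (pairwise disjoint intervals covering [0,1] are automatically consecutive).\<close>
definition bucketing :: "real set set \<Rightarrow> real \<Rightarrow> bool" where
  "bucketing T w \<longleftrightarrow> finite T \<and> real (card T) = 1 / w \<and> \<Union>T = {0..1} \<and> pairwise disjnt T \<and>
     (\<forall>\<tau>\<in>T. is_interval \<tau> \<and> \<tau> \<noteq> {} \<and> bounded \<tau> \<and> Sup \<tau> - Inf \<tau> = w)"

definition event_of :: "('x \<times> 'y) measure \<Rightarrow> 'x set \<Rightarrow> ('x \<times> 'y) set" where
  "event_of D C = {z \<in> space D. fst z \<in> C}"

definition cond_exp :: "('x \<times> 'y) measure \<Rightarrow> (('x \<times> 'y) \<Rightarrow> real) \<Rightarrow> 'x set \<Rightarrow> real" where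
  "cond_exp D f C = (\<integral>z. f z * indicator (event_of D C) z \<partial>D) / measure D (event_of D C)"

text \<open>alpha-consistency with respect to a collection of sets (sup-norm taken coordinatewise).\<close>
definition consistent_wrt :: "('x \<times> (real^'d)) measure \<Rightarrow> ('x \<Rightarrow> real^'d) \<Rightarrow> real \<Rightarrow> 'x set set \<Rightarrow> bool" where
  "consistent_wrt D h \<alpha> \<C> \<longleftrightarrow> (\<forall>C\<in>\<C>. \<forall>i.
      \<bar>cond_exp D (\<lambda>z. snd z $ i - h (fst z) $ i) C\<bar> \<le> \<alpha> / measure D (event_of D C))"

definition level_sets :: "('x \<Rightarrow> real^'d) \<Rightarrow> real set set \<Rightarrow> 'x set set" where
  "level_sets \<pi> T = {{x. \<pi> x $ i \<in> \<tau>} | i \<tau>. \<tau> \<in> T}"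

definition consistent_wrt_policy :: "('x \<times> (real^'d)) measure \<Rightarrow> ('x \<Rightarrow> real^'d) \<Rightarrow> real \<Rightarrow> ('x \<Rightarrow> real^'d) \<Rightarrow> real set set \<Rightarrow> bool" where
  "consistent_wrt_policy D h \<alpha> \<pi> T \<longleftrightarrow> consistent_wrt D h \<alpha> (level_sets \<pi> T)"

end

theory Submission
  imports Defs
begin

lemma sqrt_arith: "\<alpha> > 0 \<Longrightarrow> M > (0::real) \<Longrightarrow> \<alpha> * (1 / sqrt (\<alpha>/M)) + sqrt (\<alpha>/M) * M = 2 * sqrt (\<alpha> * M)"
proof -
  assume a: "\<alpha> > 0" "M > 0"
  have s: "sqrt \<alpha> * sqrt \<alpha> = \<alpha>" "sqrt M * sqrt M = M" using a by auto
  have "sqrt \<alpha> > 0" "sqrt M > 0" using a by auto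
  then show ?thesis using s by (simp add: real_sqrt_divide real_sqrt_mult field_simps)
qed

lemma abs_int_bound:
  fixes f g :: "'z \<Rightarrow> real"
  assumes "integrable M f" "integrable M g" "\<And>x. x \<in> space M \<Longrightarrow> \<bar>f x\<bar> \<le> g x"
  shows "\<bar>\<integral>x. f x \<partial>M\<bar> \<le> (\<integral>x. g x \<partial>M)"
proof -
  have "\<bar>\<integral>x. f x \<partial>M\<bar> \<le> (\<integral>x. \<bar>f x\<bar> \<partial>M)" by (rule integral_abs_bound)
  also have "\<dots> \<le> (\<integral>x. g x \<partial>M)" using assms by (intro integral_mono) auto
  finally show ?thesis .
qed

lemma coord_bound:
  fixes D :: "'z measure" and p g :: "'z \<Rightarrow> real"
  assumes "prob_space D" and bT: "bucketing T w" and "w > 0" and "M \<ge> 0" and "\<alpha> \<ge> 0"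
  and p: "p \<in> borel_measurable D" "\<forall>z\<in>space D. 0 \<le> p z \<and> p z \<le> 1"
  and g: "g \<in> borel_measurable D" "\<forall>z\<in>space D. \<bar>g z\<bar> \<le> 2*M"
  and cons: "\<forall>\<tau>\<in>T. \<bar>(\<integral>z. g z * indicator {z\<in>space D. p z \<in> \<tau>} z \<partial>D) / measure D {z\<in>space D. p z \<in> \<tau>}\<bar>
              \<le> \<alpha> / measure D {z\<in>space D. p z \<in> \<tau>}"
  shows "\<bar>\<integral>z. p z * g z \<partial>D\<bar> \<le> \<alpha> * card T + w * M"
proof -
  interpret prob_space D by fact
  define E where "E \<tau> = {z\<in>space D. p z \<in> \<tau>}" for \<tau>
  have fT: "finite T" and cT: "real (card T) = 1 / w" and UT: "\<Union>T = {0..1}" and dT: "pairwise disjnt T"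
    and iT: "\<And>\<tau>. \<tau> \<in> T \<Longrightarrow> is_interval \<tau> \<and> \<tau> \<noteq> {} \<and> bounded \<tau> \<and> Sup \<tau> - Inf \<tau> = w"
    using bT unfolding bucketing_def by auto
  have Esets: "E \<tau> \<in> sets D" if "\<tau> \<in> T" for \<tau>
  proof -
    have "E \<tau> = p -` \<tau> \<inter> space D" unfolding E_def by auto
    then show ?thesis using measurable_sets[OF p(1) real_interval_borel_measurable] iT[OF that] by auto
  qed
  have intg: "integrable D f" if "f \<in> borel_measurable D" "\<And>z. z \<in> space D \<Longrightarrow> \<bar>f z\<bar> \<le> B" for f :: "'z \<Rightarrow> real" and B :: real
    by (rule integrable_const_bound[where B=B]) (use that in auto)
  have gm: "(\<lambda>z. g z * indicator (E \<tau>) z) \<in> borel_measurable D" if "\<tau> \<in> T" for \<tau>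
    using g(1) Esets[OF that] by measurable
  have pgm: "(\<lambda>z. p z * g z * indicator (E \<tau>) z) \<in> borel_measurable D" if "\<tau> \<in> T" for \<tau>
    using g(1) p(1) Esets[OF that] by measurable
  have indm: "(\<lambda>z. indicator (E \<tau>) z :: real) \<in> borel_measurable D" if "\<tau> \<in> T" for \<tau>
    using Esets[OF that] by measurable
  have ind_bd: "\<bar>indicator A z :: real\<bar> \<le> 1" for A z by (simp add: indicator_def)
  have ind_int: "integrable D (\<lambda>z. indicator (E \<tau>) z :: real)" if "\<tau> \<in> T" for \<tau>
    using intg[OF indm[OF that] ind_bd] .
  have g_int: "integrable D (\<lambda>z. g z * indicator (E \<tau>) z)" if "\<tau> \<in> T" for \<tau>
  proof (rule intg[OF gm[OF that], of "2*M"])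
    fix z assume "z \<in> space D"
    then show "\<bar>g z * indicator (E \<tau>) z\<bar> \<le> 2*M" using g(2) \<open>M \<ge> 0\<close> by (auto simp: indicator_def abs_mult)
  qed
  have pg_int: "integrable D (\<lambda>z. p z * g z * indicator (E \<tau>) z)" if "\<tau> \<in> T" for \<tau>
  proof (rule intg[OF pgm[OF that], of "2*M"])
    fix z assume z: "z \<in> space D"
    have "\<bar>p z * g z\<bar> \<le> 1 * (2*M)" unfolding abs_mult
      using z g(2) p(2) by (intro mult_mono) auto
    then show "\<bar>p z * g z * indicator (E \<tau>) z\<bar> \<le> 2*M" by (auto simp: indicator_def)
  qed
  have part: "(\<Sum>\<tau>\<in>T. indicator (E \<tau>) z) = (1::real)" if z: "z \<in> space D" for z
  proof -
    have "p z \<in> \<Union>T" using UT p(2) z by auto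
    then obtain \<tau>0 where t0: "\<tau>0 \<in> T" "p z \<in> \<tau>0" by auto
    have "(\<Sum>\<tau>\<in>T. indicator (E \<tau>) z) = indicator (E \<tau>0) z + (\<Sum>\<tau>\<in>T - {\<tau>0}. indicator (E \<tau>) z :: real)"
      using sum.remove[OF fT t0(1)] by simp
    also have "(\<Sum>\<tau>\<in>T - {\<tau>0}. indicator (E \<tau>) z :: real) = 0"
    proof (rule sum.neutral, intro ballI)
      fix \<tau> assume "\<tau> \<in> T - {\<tau>0}"
      then have "disjnt \<tau> \<tau>0" using dT t0(1) unfolding pairwise_def by auto
      then show "indicator (E \<tau>) z = (0::real)" using t0 unfolding E_def disjnt_def by (auto simp: indicator_def)
    qed
    finally show ?thesis using t0 z by (simp add: E_def indicator_def)
  qed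
  have sumP: "(\<Sum>\<tau>\<in>T. measure D (E \<tau>)) = 1"
  proof -
    have "(\<Sum>\<tau>\<in>T. measure D (E \<tau>)) = (\<Sum>\<tau>\<in>T. \<integral>z. indicator (E \<tau>) z \<partial>D)"
      using Esets by (intro sum.cong) (auto simp: Int_absorb2 sets.sets_into_space)
    also have "\<dots> = (\<integral>z. (\<Sum>\<tau>\<in>T. indicator (E \<tau>) z) \<partial>D)"
      by (rule Bochner_Integration.integral_sum[symmetric]) (rule ind_int)
    also have "\<dots> = (\<integral>z. 1 \<partial>D)" by (rule Bochner_Integration.integral_cong[OF refl]) (auto simp: part)
    finally show ?thesis by (simp add: prob_space)
  qed
  have per: "\<bar>\<integral>z. p z * g z * indicator (E \<tau>) z \<partial>D\<bar> \<le> \<alpha> + w * M * measure D (E \<tau>)" if tT: "\<tau> \<in> T" for \<tau>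
  proof -
    define c where "c = (Sup \<tau> + Inf \<tau>) / 2"
    have ne: "\<tau> \<noteq> {}" and bd: "bounded \<tau>" and wd: "Sup \<tau> - Inf \<tau> = w" using iT[OF tT] by auto
    have sub: "\<tau> \<subseteq> {0..1}" using UT tT by auto
    have bdd: "bdd_above \<tau>" "bdd_below \<tau>" using bd by (auto intro: bounded_imp_bdd_above bounded_imp_bdd_below)
    have close: "\<bar>t - c\<bar> \<le> w / 2" if "t \<in> \<tau>" for t
      using cSup_upper[OF that bdd(1)] cInf_lower[OF that bdd(2)] wd unfolding c_def by (simp add: abs_le_iff field_simps)
    have "Inf \<tau> \<ge> 0" using sub ne by (intro cInf_greatest) auto
    moreover have "Sup \<tau> \<le> 1" using sub ne by (intro cSup_least) auto
    ultimately have c01: "0 \<le> c" "c \<le> 1" using wd \<open>w > 0\<close> unfolding c_def by auto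
    have cg: "\<bar>\<integral>z. g z * indicator (E \<tau>) z \<partial>D\<bar> \<le> \<alpha>"
    proof (cases "measure D (E \<tau>) = 0")
      case True
      have "\<bar>\<integral>z. g z * indicator (E \<tau>) z \<partial>D\<bar> \<le> (\<integral>z. 2 * M * indicator (E \<tau>) z \<partial>D)"
        by (rule abs_int_bound[OF g_int[OF tT]])
           (use ind_int[OF tT] g(2) \<open>M \<ge> 0\<close> in \<open>auto simp: indicator_def\<close>)
      also have "\<dots> = 0" using True Esets[OF tT] by (simp add: Int_absorb2 sets.sets_into_space)
      finally show ?thesis using \<open>\<alpha> \<ge> 0\<close> by simp
    next
      case False
      then have pos: "measure D (E \<tau>) > 0" using measure_nonneg[of D "E \<tau>"] by linarith
      have "\<bar>(\<integral>z. g z * indicator (E \<tau>) z \<partial>D) / measure D (E \<tau>)\<bar> \<le> \<alpha> / measure D (E \<tau>)"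
        using cons tT unfolding E_def by auto
      then have "\<bar>\<integral>z. g z * indicator (E \<tau>) z \<partial>D\<bar> / measure D (E \<tau>) \<le> \<alpha> / measure D (E \<tau>)"
        using pos by (simp add: abs_divide)
      then show ?thesis using pos by (simp add: divide_le_cancel)
    qed
    have split: "(\<integral>z. p z * g z * indicator (E \<tau>) z \<partial>D) =
       (\<integral>z. (p z - c) * g z * indicator (E \<tau>) z \<partial>D) + c * (\<integral>z. g z * indicator (E \<tau>) z \<partial>D)"
    proof -
      have i1: "integrable D (\<lambda>z. (p z - c) * g z * indicator (E \<tau>) z)"
      proof -
        have "integrable D (\<lambda>z. p z * g z * indicator (E \<tau>) z - c * (g z * indicator (E \<tau>) z))"
          using pg_int[OF tT] g_int[OF tT] by auto
        then show ?thesis by (simp add: algebra_simps)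
      qed
      have "(\<integral>z. p z * g z * indicator (E \<tau>) z \<partial>D) =
         (\<integral>z. (p z - c) * g z * indicator (E \<tau>) z + c * (g z * indicator (E \<tau>) z) \<partial>D)"
        by (rule Bochner_Integration.integral_cong[OF refl]) (simp add: algebra_simps)
      also have "\<dots> = (\<integral>z. (p z - c) * g z * indicator (E \<tau>) z \<partial>D) + (\<integral>z. c * (g z * indicator (E \<tau>) z) \<partial>D)"
        using i1 g_int[OF tT] by (intro Bochner_Integration.integral_add) auto
      finally show ?thesis by simp
    qed
    have b1: "\<bar>\<integral>z. (p z - c) * g z * indicator (E \<tau>) z \<partial>D\<bar> \<le> (\<integral>z. w * M * indicator (E \<tau>) z \<partial>D)"
    proof (rule abs_int_bound)
      show "integrable D (\<lambda>z. (p z - c) * g z * indicator (E \<tau>) z)"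
      proof -
        have "integrable D (\<lambda>z. p z * g z * indicator (E \<tau>) z - c * (g z * indicator (E \<tau>) z))"
          using pg_int[OF tT] g_int[OF tT] by auto
        then show ?thesis by (simp add: algebra_simps)
      qed
      show "integrable D (\<lambda>z. w * M * indicator (E \<tau>) z)" using ind_int[OF tT] by auto
      fix z assume z: "z \<in> space D"
      show "\<bar>(p z - c) * g z * indicator (E \<tau>) z\<bar> \<le> w * M * indicator (E \<tau>) z"
      proof (cases "z \<in> E \<tau>")
        case True
        then have "p z \<in> \<tau>" unfolding E_def by auto
        then have "\<bar>p z - c\<bar> * \<bar>g z\<bar> \<le> (w/2) * (2*M)"
          using close z g(2) \<open>w > 0\<close> by (intro mult_mono) auto
        then show ?thesis using True by (simp add: abs_mult)
      qed simp
    qed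
    have e2: "(\<integral>z. w * M * indicator (E \<tau>) z \<partial>D) = w * M * measure D (E \<tau>)"
      using Esets[OF tT] by (simp add: Int_absorb2 sets.sets_into_space)
    have "\<bar>c * (\<integral>z. g z * indicator (E \<tau>) z \<partial>D)\<bar> \<le> 1 * \<alpha>"
      unfolding abs_mult using c01 cg by (intro mult_mono) auto
    then show ?thesis using split b1 e2 by linarith
  qed
  have "(\<integral>z. p z * g z \<partial>D) = (\<integral>z. (\<Sum>\<tau>\<in>T. p z * g z * indicator (E \<tau>) z) \<partial>D)"
  proof (rule Bochner_Integration.integral_cong[OF refl])
    fix z assume z: "z \<in> space D"
    have "(\<Sum>\<tau>\<in>T. p z * g z * indicator (E \<tau>) z) = p z * g z * (\<Sum>\<tau>\<in>T. indicator (E \<tau>) z)"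
      by (rule sum_distrib_left[symmetric])
    then show "p z * g z = (\<Sum>\<tau>\<in>T. p z * g z * indicator (E \<tau>) z)" using part[OF z] by simp
  qed
  also have "\<dots> = (\<Sum>\<tau>\<in>T. \<integral>z. p z * g z * indicator (E \<tau>) z \<partial>D)"
    by (rule Bochner_Integration.integral_sum) (rule pg_int)
  finally have "\<bar>\<integral>z. p z * g z \<partial>D\<bar> \<le> (\<Sum>\<tau>\<in>T. \<bar>\<integral>z. p z * g z * indicator (E \<tau>) z \<partial>D\<bar>)"
    by (metis sum_abs)
  also have "\<dots> \<le> (\<Sum>\<tau>\<in>T. \<alpha> + w * M * measure D (E \<tau>))" by (rule sum_mono) (rule per)
  also have "\<dots> = (\<Sum>\<tau>\<in>T. \<alpha>) + (\<Sum>\<tau>\<in>T. w * M * measure D (E \<tau>))" by (rule sum.distrib)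
  also have "(\<Sum>\<tau>\<in>T. w * M * measure D (E \<tau>)) = w * M * (\<Sum>\<tau>\<in>T. measure D (E \<tau>))" by (rule sum_distrib_left[symmetric])
  also have "(\<Sum>\<tau>\<in>T. \<alpha>) = \<alpha> * card T" by simp
  also have "\<alpha> * card T + w * M * (\<Sum>\<tau>\<in>T. measure D (E \<tau>)) = \<alpha> * card T + w * M" using sumP by simp
  finally show ?thesis .
qed

theorem lemma3:
  fixes D :: "('x \<times> (real^'d)) measure"
    and Y :: "(real^'d) set" and \<Omega> :: "(real^'d) set"
    and M \<alpha> :: real and T :: "real set set"
    and \<pi> h :: "'x \<Rightarrow> real^'d"
  assumes "prob_space D"
    and "\<forall>z\<in>space D. snd z \<in> Y"
    and "\<forall>y\<in>Y. \<forall>i. \<bar>y $ i\<bar> \<le> M"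
    and "M > 0" and "\<alpha> > 0"
    and "bucketing T (sqrt (\<alpha> / M))"
    and "\<Omega> \<subseteq> {v. \<forall>i. 0 \<le> v $ i \<and> v $ i \<le> 1}"
    and "\<forall>x. \<pi> x \<in> \<Omega>"
    and "\<forall>x. h x \<in> Y"
    and "(\<lambda>z. \<pi> (fst z)) \<in> borel_measurable D"
    and "(\<lambda>z. h (fst z)) \<in> borel_measurable D"
    and "snd \<in> borel_measurable D"
    and "consistent_wrt_policy D h \<alpha> \<pi> T"
  shows "\<bar>(\<integral>z. \<pi> (fst z) \<bullet> h (fst z) \<partial>D) - (\<integral>z. \<pi> (fst z) \<bullet> snd z \<partial>D)\<bar>
           \<le> 2 * real CARD('d) * sqrt (\<alpha> * M)"
proof -
  interpret prob_space D by fact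
  note A = assms
  define w where "w = sqrt (\<alpha> / M)"
  have w0: "w > 0" unfolding w_def using A(4,5) by auto
  have cT: "real (card T) = 1 / w" using A(6) unfolding w_def bucketing_def by auto
  have pm: "(\<lambda>z. \<pi> (fst z) $ i) \<in> borel_measurable D" for i
    using measurable_compose[OF A(10) borel_measurable_nth] by simp
  have hm: "(\<lambda>z. h (fst z) $ i) \<in> borel_measurable D" for i
    using measurable_compose[OF A(11) borel_measurable_nth] by simp
  have ym: "(\<lambda>z. snd z $ i) \<in> borel_measurable D" for i
    using measurable_compose[OF A(12) borel_measurable_nth] by simp
  have p01: "0 \<le> \<pi> x $ i \<and> \<pi> x $ i \<le> 1" for x i using A(7,8) by auto
  have hb: "\<bar>h x $ i\<bar> \<le> M" for x i using A(3,9) by auto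
  have yb: "\<bar>snd z $ i\<bar> \<le> M" if "z \<in> space D" for z i using A(2,3) that by auto
  have intg: "integrable D f" if "f \<in> borel_measurable D" "\<And>z. z \<in> space D \<Longrightarrow> \<bar>f z\<bar> \<le> B" for f :: "_ \<Rightarrow> real" and B :: real
    by (rule integrable_const_bound[where B=B]) (use that in auto)
  have coord: "\<bar>\<integral>z. \<pi> (fst z) $ i * (snd z $ i - h (fst z) $ i) \<partial>D\<bar> \<le> \<alpha> * card T + w * M" for i
  proof (rule coord_bound[OF A(1) A(6)[folded w_def] w0])
    show "0 \<le> M" "0 \<le> \<alpha>" using A(4,5) by auto
    show "(\<lambda>z. \<pi> (fst z) $ i) \<in> borel_measurable D" by (rule pm)
    show "\<forall>z\<in>space D. 0 \<le> \<pi> (fst z) $ i \<and> \<pi> (fst z) $ i \<le> 1" using p01 by auto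
    show "(\<lambda>z. snd z $ i - h (fst z) $ i) \<in> borel_measurable D" using ym hm by measurable
    show "\<forall>z\<in>space D. \<bar>snd z $ i - h (fst z) $ i\<bar> \<le> 2 * M"
    proof
      fix z assume "z \<in> space D"
      then have "\<bar>snd z $ i\<bar> \<le> M" "\<bar>h (fst z) $ i\<bar> \<le> M" using yb hb by auto
      then show "\<bar>snd z $ i - h (fst z) $ i\<bar> \<le> 2 * M" by linarith
    qed
    show "\<forall>\<tau>\<in>T. \<bar>(\<integral>z. (snd z $ i - h (fst z) $ i) * indicator {z \<in> space D. \<pi> (fst z) $ i \<in> \<tau>} z \<partial>D) /
          measure D {z \<in> space D. \<pi> (fst z) $ i \<in> \<tau>}\<bar> \<le> \<alpha> / measure D {z \<in> space D. \<pi> (fst z) $ i \<in> \<tau>}"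
    proof
      fix \<tau> assume t: "\<tau> \<in> T"
      define C where "C = {x. \<pi> x $ i \<in> \<tau>}"
      have "C \<in> level_sets \<pi> T" unfolding C_def level_sets_def using t by blast
      then have "\<bar>cond_exp D (\<lambda>z. snd z $ i - h (fst z) $ i) C\<bar> \<le> \<alpha> / measure D (event_of D C)"
        using A(13) unfolding consistent_wrt_policy_def consistent_wrt_def by blast
      moreover have "event_of D C = {z \<in> space D. \<pi> (fst z) $ i \<in> \<tau>}" unfolding event_of_def C_def by auto
      ultimately show "\<bar>(\<integral>z. (snd z $ i - h (fst z) $ i) * indicator {z \<in> space D. \<pi> (fst z) $ i \<in> \<tau>} z \<partial>D) /
          measure D {z \<in> space D. \<pi> (fst z) $ i \<in> \<tau>}\<bar> \<le> \<alpha> / measure D {z \<in> space D. \<pi> (fst z) $ i \<in> \<tau>}"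
        unfolding cond_exp_def by simp
    qed
  qed
  have ih: "integrable D (\<lambda>z. \<pi> (fst z) $ i * h (fst z) $ i)" for i
  proof (rule intg[of _ M])
    show "(\<lambda>z. \<pi> (fst z) $ i * h (fst z) $ i) \<in> borel_measurable D" using pm hm by measurable
    fix z
    have "\<bar>\<pi> (fst z) $ i\<bar> * \<bar>h (fst z) $ i\<bar> \<le> 1 * M" using p01 hb by (intro mult_mono) auto
    then show "\<bar>\<pi> (fst z) $ i * h (fst z) $ i\<bar> \<le> M" by (simp add: abs_mult)
  qed
  have iy: "integrable D (\<lambda>z. \<pi> (fst z) $ i * snd z $ i)" for i
  proof (rule intg[of _ M])
    show "(\<lambda>z. \<pi> (fst z) $ i * snd z $ i) \<in> borel_measurable D" using pm ym by measurable
    fix z assume "z \<in> space D"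
    then have "\<bar>\<pi> (fst z) $ i\<bar> * \<bar>snd z $ i\<bar> \<le> 1 * M" using p01 yb by (intro mult_mono) auto
    then show "\<bar>\<pi> (fst z) $ i * snd z $ i\<bar> \<le> M" by (simp add: abs_mult)
  qed
  have e1: "(\<integral>z. \<pi> (fst z) \<bullet> h (fst z) \<partial>D) = (\<Sum>i\<in>UNIV. \<integral>z. \<pi> (fst z) $ i * h (fst z) $ i \<partial>D)"
    unfolding inner_vec_def inner_real_def by (rule Bochner_Integration.integral_sum) (rule ih)
  have e2: "(\<integral>z. \<pi> (fst z) \<bullet> snd z \<partial>D) = (\<Sum>i\<in>UNIV. \<integral>z. \<pi> (fst z) $ i * snd z $ i \<partial>D)"
    unfolding inner_vec_def inner_real_def by (rule Bochner_Integration.integral_sum) (rule iy)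
  have e3: "(\<integral>z. \<pi> (fst z) $ i * h (fst z) $ i \<partial>D) - (\<integral>z. \<pi> (fst z) $ i * snd z $ i \<partial>D)
      = - (\<integral>z. \<pi> (fst z) $ i * (snd z $ i - h (fst z) $ i) \<partial>D)" for i
  proof -
    have "(\<integral>z. \<pi> (fst z) $ i * (snd z $ i - h (fst z) $ i) \<partial>D) =
        (\<integral>z. \<pi> (fst z) $ i * snd z $ i - \<pi> (fst z) $ i * h (fst z) $ i \<partial>D)"
      by (simp add: right_diff_distrib)
    also have "\<dots> = (\<integral>z. \<pi> (fst z) $ i * snd z $ i \<partial>D) - (\<integral>z. \<pi> (fst z) $ i * h (fst z) $ i \<partial>D)"
      by (rule Bochner_Integration.integral_diff[OF iy ih])
    finally show ?thesis by simp
  qed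
  have "\<bar>(\<integral>z. \<pi> (fst z) \<bullet> h (fst z) \<partial>D) - (\<integral>z. \<pi> (fst z) \<bullet> snd z \<partial>D)\<bar>
      = \<bar>\<Sum>i\<in>UNIV. - (\<integral>z. \<pi> (fst z) $ i * (snd z $ i - h (fst z) $ i) \<partial>D)\<bar>"
    unfolding e1 e2 sum_subtractf[symmetric] e3 ..
  also have "\<dots> \<le> (\<Sum>i\<in>UNIV. \<bar>- (\<integral>z. \<pi> (fst z) $ i * (snd z $ i - h (fst z) $ i) \<partial>D)\<bar>)"
    by (rule sum_abs)
  also have "\<dots> \<le> (\<Sum>i\<in>(UNIV::'d set). \<alpha> * card T + w * M)"
    by (rule sum_mono) (use coord in simp)
  also have "\<dots> = real CARD('d) * (\<alpha> * (1 / w) + w * M)" using cT by simp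
  also have "\<alpha> * (1 / w) + w * M = 2 * sqrt (\<alpha> * M)" unfolding w_def using sqrt_arith A(4,5) by blast
  finally show ?thesis by simp
qed

end
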